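(* Let $p$ be an odd prime, $r=(p-1)/2$, $\zeta_p=e^{2\pi i/p}$, $\varepsilon=(-1)^{(p-1)/2}$, and let $Q$ be either $Q_1(x)=x^2/p$ or $Q_2(x)=cx^2/p$ with $c$ a fixed quadratic non-residue mod $p$; let $B(x,y)=Q(x+y)-Q(x)-Q(y)$ and $G_Q=\sum_{x\in\mathbb{Z}/p\mathbb{Z}}e^{2\pi iQ(x)}$. Define $(r+1)\times(r+1)$ matrices indexed by $0\le j,k\le r$: $T=\operatorname{diag}(\theta_0,\dots,\theta_r)$ with $\theta_j=e^{2\pi iQ(j)}$, and $S$ with $S_{j0}=1/G_Q$ for all $j$, $S_{0k}=2/G_Q$ for $1\le k\le r$, and $S_{jk}=\frac{1}{G_Q}\left(e^{-2\pi iB(j,k)}+e^{2\pi iB(j,k)}\right)$ for $1\le j,k\le r$. Let $\xi:\mathrm{SL}_2(\mathbb{F}_p)\to\mathrm{GL}_{r+1}(\mathbb{Q}(\zeta_p))$ be the representation with $\xi(\mathfrak{s})=S$, $\xi(\mathfrak{t})=T$, where $\mathfrak{s}=\begin{pmatrix}0&-1\\1&0\end{pmatrix}$, $\mathfrak{t}=\begin{pmatrix}1&1\\0&1\end{pmatrix}$. Let $\gamma$ be a generator of the cyclic group $\mathrm{Gal}(\mathbb{Q}(\zeta_p)/\mathbb{Q})$, let $\tau=\gamma^2$, and let $V_Q$ be the Vandermonde matrix with $(j,k)$ entry $\theta_j^{\,k}$ ($0\le j,k\le r$). Then $\tau$ permutes $\{\theta_0,\dots,\theta_r\}$ fixing $\theta_0=1$,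 so there is a unique permutation matrix $P$ with $\tau(V_Q)=P\,V_Q$; and for every $g\in\mathrm{SL}_2(\mathbb{F}_p)$ one has $\tau(\xi(g))=P\,\xi(g)\,P^{-1}$.
   Context: For $\alpha\in\mathrm{Gal}(\mathbb{Q}(\zeta_p)/\mathbb{Q})$ and a matrix $M$ with entries in $\mathbb{Q}(\zeta_p)$, $\alpha(M)$ denotes the matrix obtained by applying $\alpha$ to each entry. The matrices $S,T$ are the matrices of the Weil representation attached to $Q$ restricted to the subspace of even functions $\mathbb{Z}/p\mathbb{Z}\to\mathbb{C}$, in the basis $\delta_0,\ \delta_1+\delta_{p-1},\dots,\delta_r+\delta_{r+1}$; $\xi$ is the principal series Weil representation of dimension $(p+1)/2$ ($\xi_1$ for $Q_1$, $\xi_2$ for $Q_2$). One has $G_{Q}=\pm\sqrt{\varepsilon p}$, where $\sqrt{\varepsilon p}=\sum_x \zeta_p^{x^2}$. *)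

theory Defs
  imports "HOL-Number_Theory.Number_Theory" "Jordan_Normal_Form.Matrix"
begin

definition e :: "real \<Rightarrow> complex" where
  "e x = exp (2 * of_real pi * \<i> * of_real x)"

definition zeta :: "nat \<Rightarrow> complex" where
  "zeta p = e (1 / real p)"

(* Q(x) = c x^2 / p ; c = 1 gives Q_1, c a non-residue gives Q_2 *)
definition Qf :: "nat \<Rightarrow> int \<Rightarrow> int \<Rightarrow> real" where
  "Qf p c x = real_of_int (c * x^2) / real p"

definition Bf :: "nat \<Rightarrow> int \<Rightarrow> int \<Rightarrow> int \<Rightarrow> real" where
  "Bf p c x y = Qf p c (x + y) - Qf p c x - Qf p c y"

definition gauss :: "nat \<Rightarrow> int \<Rightarrow> complex" where
  "gauss p c = (\<Sum>x\<in>{0..<int p}. e (Qf p c x))"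

definition theta :: "nat \<Rightarrow> int \<Rightarrow> nat \<Rightarrow> complex" where
  "theta p c j = e (Qf p c (int j))"

definition Tmat :: "nat \<Rightarrow> int \<Rightarrow> complex mat" where
  "Tmat p c = (let r = (p - 1) div 2 in
     mat (r + 1) (r + 1) (\<lambda>(j, k). if j = k then theta p c j else 0))"

definition Smat :: "nat \<Rightarrow> int \<Rightarrow> complex mat" where
  "Smat p c = (let r = (p - 1) div 2; G = gauss p c in
     mat (r + 1) (r + 1) (\<lambda>(j, k).
       if k = 0 then 1 / G
       else if j = 0 then 2 / G
       else (e (- Bf p c (int j) (int k)) + e (Bf p c (int j) (int k))) / G))"

definition Vmat :: "nat \<Rightarrow> int \<Rightarrow> complex mat" where
  "Vmat p c = (let r = (p - 1) div 2 in
     mat (r + 1) (r + 1) (\<lambda>(j, k). theta p c j ^ k))"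

(* SL_2(F_p): 2x2 matrices (a,b,c,d) = [[a,b],[c,d]] with entries in {0..p-1}, det = 1 mod p *)
definition SL2 :: "nat \<Rightarrow> (int \<times> int \<times> int \<times> int) set" where
  "SL2 p = {(a, b, c, d). a \<in> {0..<int p} \<and> b \<in> {0..<int p} \<and> c \<in> {0..<int p}
              \<and> d \<in> {0..<int p} \<and> (a * d - b * c) mod int p = 1}"

definition SL2_mult :: "nat \<Rightarrow> (int \<times> int \<times> int \<times> int) \<Rightarrow> (int \<times> int \<times> int \<times> int)
                         \<Rightarrow> (int \<times> int \<times> int \<times> int)" where
  "SL2_mult p g h = (case g of (a, b, c, d) \<Rightarrow> case h of (a', b', c', d') \<Rightarrow>
     ((a * a' + b * c') mod int p, (a * b' + b * d') mod int p,
      (c * a' + d * c') mod int p, (c * b' + d * d') mod int p))"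

definition s_gen :: "nat \<Rightarrow> int \<times> int \<times> int \<times> int" where
  "s_gen p = (0, int p - 1, 1, 0)"

definition t_gen :: "nat \<Rightarrow> int \<times> int \<times> int \<times> int" where
  "t_gen p = (1, 1, 0, 1)"

definition cyc_field :: "nat \<Rightarrow> complex set" where
  "cyc_field p = \<Inter>{F. zeta p \<in> F \<and> 0 \<in> F \<and> 1 \<in> F \<and>
      (\<forall>x\<in>F. \<forall>y\<in>F. x + y \<in> F \<and> x * y \<in> F \<and> - x \<in> F \<and> (x \<noteq> 0 \<longrightarrow> inverse x \<in> F))}"

(* Gal(Q(zeta_p)/Q): field automorphisms of Q(zeta_p) (extended by the identity outside,
   so that each automorphism is represented by a unique function complex => complex).
   Every field automorphism fixes Q pointwise. *)
definition gal :: "nat \<Rightarrow> (complex \<Rightarrow> complex) set" where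
  "gal p = {\<sigma>. bij_betw \<sigma> (cyc_field p) (cyc_field p) \<and> \<sigma> 1 = 1 \<and>
      (\<forall>x\<in>cyc_field p. \<forall>y\<in>cyc_field p. \<sigma> (x + y) = \<sigma> x + \<sigma> y \<and> \<sigma> (x * y) = \<sigma> x * \<sigma> y) \<and>
      (\<forall>x. x \<notin> cyc_field p \<longrightarrow> \<sigma> x = x)}"

definition is_gal_generator :: "nat \<Rightarrow> (complex \<Rightarrow> complex) \<Rightarrow> bool" where
  "is_gal_generator p \<gamma> \<longleftrightarrow> \<gamma> \<in> gal p \<and> (\<forall>\<sigma>\<in>gal p. \<exists>n. \<sigma> = \<gamma> ^^ n)"

definition perm_mat :: "nat \<Rightarrow> complex mat \<Rightarrow> bool" where
  "perm_mat n P \<longleftrightarrow> (\<exists>\<pi>. \<pi> permutes {..<n} \<and>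
      P = mat n n (\<lambda>(i, j). if \<pi> i = j then 1 else 0))"

definition is_xi :: "nat \<Rightarrow> int \<Rightarrow> ((int \<times> int \<times> int \<times> int) \<Rightarrow> complex mat) \<Rightarrow> bool" where
  "is_xi p c \<xi> \<longleftrightarrow> (let r = (p - 1) div 2 in
     (\<forall>g\<in>SL2 p. \<xi> g \<in> carrier_mat (r + 1) (r + 1) \<and> invertible_mat (\<xi> g) \<and>
         (\<forall>i<r + 1. \<forall>j<r + 1. \<xi> g $$ (i, j) \<in> cyc_field p)) \<and>
     (\<forall>g\<in>SL2 p. \<forall>h\<in>SL2 p. \<xi> (SL2_mult p g h) = \<xi> g * \<xi> h) \<and>
     \<xi> (s_gen p) = Smat p c \<and> \<xi> (t_gen p) = Tmat p c)"

end

theory Submission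
  imports Defs
begin

definition Z :: "nat \<Rightarrow> int \<Rightarrow> complex" where
  "Z p m = zeta p ^ nat (m mod int p)"

lemma e_cis: "e x = cis (2 * pi * x)"
  unfolding e_def cis_conv_exp by (simp add: mult_ac)

lemma zeta_cis: "zeta p = cis (2 * pi / real p)"
  unfolding zeta_def e_cis by simp

lemma zeta_pow: "zeta p ^ k = cis (2 * pi * real k / real p)"
  unfolding zeta_cis DeMoivre by (simp add: field_simps)

lemma zeta_pow_p: "p > 0 \<Longrightarrow> zeta p ^ p = 1"
  unfolding zeta_pow by simp

lemma zeta_pow_mod: "p > 0 \<Longrightarrow> zeta p ^ k = zeta p ^ (k mod p)"
proof -
  assume "p > 0"
  have "(zeta p ^ p) ^ (k div p) * zeta p ^ (k mod p) = zeta p ^ (p * (k div p) + k mod p)"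
    by (simp only: power_add power_mult)
  also have "p * (k div p) + k mod p = k" by simp
  finally show ?thesis using zeta_pow_p[OF \<open>p>0\<close>] by simp
qed

lemma zeta_pow_inj: "p > 0 \<Longrightarrow> zeta p ^ k = zeta p ^ l \<longleftrightarrow> k mod p = l mod p"
proof
  assume p: "p > 0"
  assume "zeta p ^ k = zeta p ^ l"
  hence "zeta p ^ (k mod p) = zeta p ^ (l mod p)" using zeta_pow_mod[OF p] by metis
  hence "cis (2 * pi * real (k mod p) / real p) = cis (2 * pi * real (l mod p) / real p)"
    unfolding zeta_pow .
  moreover have "inj_on (\<lambda>k. cis (2 * pi * real k / real p)) {..<p}"
    using bij_betw_roots_unity[OF p] bij_betw_def by blast
  ultimately show "k mod p = l mod p" using p by (auto simp: inj_on_def)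
next
  assume p: "p > 0" "k mod p = l mod p"
  thus "zeta p ^ k = zeta p ^ l" using zeta_pow_mod[OF p(1)] by metis
qed

lemma roots_are_zeta_pow: assumes "p > 0" "z ^ p = 1" shows "\<exists>k<p. z = zeta p ^ k"
proof -
  have "z \<in> {z. z ^ p = 1}" using assms by simp
  then obtain k where "k < p" "z = cis (2 * pi * real k / real p)"
    using bij_betw_roots_unity[OF assms(1)] unfolding bij_betw_def by auto
  thus ?thesis unfolding zeta_pow[symmetric] by blast
qed

lemma Z_nat: "p > 0 \<Longrightarrow> Z p (int k) = zeta p ^ k"
  unfolding Z_def by (subst zeta_pow_inj) (auto simp: nat_mod_as_int)

lemma Z_eq: "p > 0 \<Longrightarrow> Z p m = Z p n \<longleftrightarrow> m mod int p = n mod int p"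
  unfolding Z_def by (subst zeta_pow_inj) (auto simp: nat_mod_as_int eq_nat_nat_iff)

lemma Z_add: "p > 0 \<Longrightarrow> Z p (m + n) = Z p m * Z p n"
proof -
  assume p: "p > 0"
  have "Z p m * Z p n = zeta p ^ (nat (m mod int p) + nat (n mod int p))"
    unfolding Z_def power_add ..
  also have "\<dots> = Z p (int (nat (m mod int p) + nat (n mod int p)))" by (simp only: Z_nat[OF p])
  also have "int (nat (m mod int p) + nat (n mod int p)) = m mod int p + n mod int p" using p by simp
  also have "Z p (m mod int p + n mod int p) = Z p (m + n)" using p by (subst Z_eq) (auto simp: mod_simps)
  finally show ?thesis ..
qed

lemma Z_mod: "p > 0 \<Longrightarrow> Z p (m mod int p) = Z p m"
  by (subst Z_eq) auto

lemma e_Z: assumes "p > 0" shows "e (real_of_int m / real p) = Z p m"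
proof -
  define q where "q = m div int p"
  define r where "r = m mod int p"
  have r0: "r \<ge> 0" using assms unfolding r_def by simp
  have "m = int p * q + r" unfolding q_def r_def by simp
  hence "real_of_int m = real p * real_of_int q + real_of_int r"
    by (metis of_int_add of_int_mult of_int_of_nat_eq)
  hence "real_of_int m / real p = real_of_int q + real_of_int r / real p"
    using assms by (simp add: add_divide_distrib)
  hence "e (real_of_int m / real p) = cis (2 * pi * real_of_int q) * cis (2 * pi * real_of_int r / real p)"
    unfolding e_cis cis_mult by (simp add: distrib_left)
  also have "cis (2 * pi * real_of_int q) = 1" by (rule cis_multiple_2pi) auto
  also have "real_of_int r = real (nat r)" using r0 by simp
  finally show ?thesis unfolding Z_def zeta_pow r_def by simp
qed

lemma Z_zero: "p > 0 \<Longrightarrow> Z p 0 = 1" unfolding Z_def by simp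

definition Fprop where "Fprop p F \<longleftrightarrow> zeta p \<in> F \<and> 0 \<in> F \<and> 1 \<in> F \<and>
      (\<forall>x\<in>F. \<forall>y\<in>F. x + y \<in> F \<and> x * y \<in> F \<and> - x \<in> F \<and> (x \<noteq> 0 \<longrightarrow> inverse x \<in> F))"

lemma cyc_alt: "cyc_field p = \<Inter>{F. Fprop p F}" unfolding cyc_field_def Fprop_def ..

lemma cyc_zeta: "zeta p \<in> cyc_field p" unfolding cyc_alt Fprop_def by auto
lemma cyc_0: "0 \<in> cyc_field p" unfolding cyc_alt Fprop_def by auto
lemma cyc_1: "1 \<in> cyc_field p" unfolding cyc_alt Fprop_def by auto
lemma cyc_add: "x \<in> cyc_field p \<Longrightarrow> y \<in> cyc_field p \<Longrightarrow> x + y \<in> cyc_field p"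
  unfolding cyc_alt Fprop_def by auto
lemma cyc_mult: "x \<in> cyc_field p \<Longrightarrow> y \<in> cyc_field p \<Longrightarrow> x * y \<in> cyc_field p"
  unfolding cyc_alt Fprop_def by auto
lemma cyc_uminus: "x \<in> cyc_field p \<Longrightarrow> - x \<in> cyc_field p"
  unfolding cyc_alt Fprop_def by auto
lemma cyc_inverse: "x \<in> cyc_field p \<Longrightarrow> inverse x \<in> cyc_field p"
  using cyc_0[of p] unfolding cyc_alt Fprop_def by (cases "x = 0") auto
lemma cyc_divide: "x \<in> cyc_field p \<Longrightarrow> y \<in> cyc_field p \<Longrightarrow> x / y \<in> cyc_field p"
  unfolding divide_inverse by (intro cyc_mult cyc_inverse)
lemma cyc_pow: "x \<in> cyc_field p \<Longrightarrow> x ^ n \<in> cyc_field p"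
  by (induction n) (auto intro: cyc_1 cyc_mult)
lemma cyc_sum: "(\<And>x. x \<in> A \<Longrightarrow> f x \<in> cyc_field p) \<Longrightarrow> sum f A \<in> cyc_field p"
  by (induction A rule: infinite_finite_induct) (auto intro: cyc_0 cyc_add)
lemma cyc_Z: "Z p m \<in> cyc_field p" unfolding Z_def by (intro cyc_pow cyc_zeta)
lemma cyc_2: "2 \<in> cyc_field p" using cyc_add[OF cyc_1 cyc_1, of p] by simp

locale galp =
  fixes p :: nat and \<sigma> :: "complex \<Rightarrow> complex"
  assumes gal: "\<sigma> \<in> gal p"
begin

abbreviation "F \<equiv> cyc_field p"

lemma G: "bij_betw \<sigma> F F \<and> \<sigma> 1 = 1 \<and>
      (\<forall>x\<in>F. \<forall>y\<in>F. \<sigma> (x + y) = \<sigma> x + \<sigma> y \<and> \<sigma> (x * y) = \<sigma> x * \<sigma> y) \<and>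
      (\<forall>x. x \<notin> F \<longrightarrow> \<sigma> x = x)"
  using gal unfolding gal_def by (rule CollectD)
lemma bij: "bij_betw \<sigma> F F" using G by (rule conjunct1)
lemma inF: "x \<in> F \<Longrightarrow> \<sigma> x \<in> F" using bij by (rule bij_betw_apply)
lemma inj: "x \<in> F \<Longrightarrow> y \<in> F \<Longrightarrow> \<sigma> x = \<sigma> y \<longleftrightarrow> x = y"
  using bij unfolding bij_betw_def inj_on_def by metis
lemma HH: "x \<in> F \<Longrightarrow> y \<in> F \<Longrightarrow> \<sigma> (x + y) = \<sigma> x + \<sigma> y \<and> \<sigma> (x * y) = \<sigma> x * \<sigma> y"
  using G[THEN conjunct2, THEN conjunct2, THEN conjunct1] by simp
lemma add: "x \<in> F \<Longrightarrow> y \<in> F \<Longrightarrow> \<sigma> (x + y) = \<sigma> x + \<sigma> y" using HH by (rule conjunct1)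
lemma mult: "x \<in> F \<Longrightarrow> y \<in> F \<Longrightarrow> \<sigma> (x * y) = \<sigma> x * \<sigma> y" using HH by (rule conjunct2)
lemma one: "\<sigma> 1 = 1" using G by (rule conjunct2[THEN conjunct1])
lemma outside: "x \<notin> F \<Longrightarrow> \<sigma> x = x" using G[THEN conjunct2, THEN conjunct2, THEN conjunct2] by simp
lemma zero: "\<sigma> 0 = 0"
proof -
  have "\<sigma> (0 + 0) = \<sigma> 0 + \<sigma> 0" by (rule add) (auto intro: cyc_0)
  thus ?thesis by simp
qed
lemma two: "\<sigma> 2 = 2"
proof -
  have "\<sigma> (1 + 1) = \<sigma> 1 + \<sigma> 1" by (rule add) (auto intro: cyc_1)
  thus ?thesis by (simp add: one)
qed
lemma pow: "x \<in> F \<Longrightarrow> \<sigma> (x ^ n) = \<sigma> x ^ n"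
  by (induction n) (auto simp: one mult cyc_pow)
lemma sum: "(\<And>x. x \<in> A \<Longrightarrow> f x \<in> F) \<Longrightarrow> \<sigma> (sum f A) = (\<Sum>x\<in>A. \<sigma> (f x))"
proof (induction A rule: infinite_finite_induct)
  case (insert x A)
  have "\<sigma> (f x + sum f A) = \<sigma> (f x) + \<sigma> (sum f A)"
    by (rule add) (use insert.prems in \<open>auto intro!: cyc_sum\<close>)
  thus ?case using insert by simp
qed (auto simp: zero)
lemma inverse: "x \<in> F \<Longrightarrow> \<sigma> (inverse x) = inverse (\<sigma> x)"
proof (cases "x = 0")
  case True thus ?thesis by (simp add: zero)
next
  case False
  assume x: "x \<in> F"
  have "\<sigma> x * \<sigma> (inverse x) = \<sigma> (x * inverse x)" by (rule mult[symmetric]) (use x in \<open>auto intro: cyc_inverse\<close>)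
  also have "\<dots> = 1" using False one by simp
  finally have "inverse (\<sigma> x) = \<sigma> (inverse x)" by (rule inverse_unique)
  thus ?thesis ..
qed
lemma divide: "x \<in> F \<Longrightarrow> y \<in> F \<Longrightarrow> \<sigma> (x / y) = \<sigma> x / \<sigma> y"
  unfolding divide_inverse by (simp add: mult cyc_inverse inverse)

lemma zeta_img: assumes "p > 1" shows "\<exists>a. 0 < a \<and> a < p \<and> \<sigma> (zeta p) = zeta p ^ a"
proof -
  have "\<sigma> (zeta p) ^ p = \<sigma> (zeta p ^ p)" by (rule pow[symmetric]) (rule cyc_zeta)
  also have "\<dots> = 1" using zeta_pow_p[of p] one assms by simp
  finally obtain a where a: "a < p" "\<sigma> (zeta p) = zeta p ^ a"
    using roots_are_zeta_pow[of p "\<sigma> (zeta p)"] assms by auto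
  have "zeta p \<noteq> 1" using zeta_pow_inj[of p 1 0] assms by simp
  hence "\<sigma> (zeta p) \<noteq> 1" using inj[of "zeta p" 1, OF cyc_zeta cyc_1] one by simp
  hence "a \<noteq> 0" using a by (metis power_0)
  thus ?thesis using a by auto
qed

lemma Z_img: assumes "p > 0" "\<sigma> (zeta p) = zeta p ^ a" shows "\<sigma> (Z p m) = Z p (int a * m)"
proof -
  have "\<sigma> (Z p m) = zeta p ^ (a * nat (m mod int p))"
    unfolding Z_def by (simp only: pow cyc_zeta assms power_mult)
  also have "\<dots> = Z p (int (a * nat (m mod int p)))" by (rule Z_nat[symmetric]) fact
  also have "int (a * nat (m mod int p)) = int a * (m mod int p)" using assms(1) by simp
  also have "Z p (int a * (m mod int p)) = Z p (int a * m)"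
    using assms(1) Z_eq mod_mult_right_eq by blast
  finally show ?thesis .
qed

end

lemma gal_comp: assumes "\<sigma> \<in> gal p" "\<rho> \<in> gal p" shows "\<sigma> \<circ> \<rho> \<in> gal p"
proof -
  interpret s: galp p \<sigma> by unfold_locales fact
  interpret r: galp p \<rho> by unfold_locales fact
  have 1: "bij_betw (\<sigma> \<circ> \<rho>) (cyc_field p) (cyc_field p)" using r.bij s.bij by (rule bij_betw_trans)
  have 2: "(\<sigma> \<circ> \<rho>) 1 = 1" by (simp add: r.one s.one)
  have 3: "\<forall>x\<in>cyc_field p. \<forall>y\<in>cyc_field p. (\<sigma> \<circ> \<rho>) (x + y) = (\<sigma> \<circ> \<rho>) x + (\<sigma> \<circ> \<rho>) y \<and>
      (\<sigma> \<circ> \<rho>) (x * y) = (\<sigma> \<circ> \<rho>) x * (\<sigma> \<circ> \<rho>) y"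
    by (simp add: r.add r.mult s.add s.mult r.inF)
  have 4: "\<forall>x. x \<notin> cyc_field p \<longrightarrow> (\<sigma> \<circ> \<rho>) x = x" by (simp add: r.outside s.outside)
  show ?thesis unfolding gal_def using 1 2 3 4 by (intro CollectI conjI)
qed

lemma SL2_closed:
  assumes p: "p > 1" and g: "g \<in> SL2 p" and h: "h \<in> SL2 p"
  shows "SL2_mult p g h \<in> SL2 p"
proof -
  obtain a b c d where gd: "g = (a,b,c,d)" by (cases g) auto
  obtain a' b' c' d' where hd: "h = (a',b',c',d')" by (cases h) auto
  let ?P = "int p"
  have d1: "(a*d - b*c) mod ?P = 1" and d2: "(a'*d' - b'*c') mod ?P = 1"
    using g h unfolding gd hd SL2_def by auto
  have "((a * a' + b * c') mod ?P * ((c * b' + d * d') mod ?P) -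
         (a * b' + b * d') mod ?P * ((c * a' + d * c') mod ?P)) mod ?P
      = ((a * a' + b * c') * (c * b' + d * d') - (a * b' + b * d') * (c * a' + d * c')) mod ?P"
    by (metis mod_diff_eq mod_mult_eq)
  also have "(a * a' + b * c') * (c * b' + d * d') - (a * b' + b * d') * (c * a' + d * c')
      = (a*d - b*c) * (a'*d' - b'*c')" by (simp add: algebra_simps)
  also have "((a*d - b*c) * (a'*d' - b'*c')) mod ?P = ((a*d - b*c) mod ?P * ((a'*d' - b'*c') mod ?P)) mod ?P"
    by (simp add: mod_simps)
  also have "\<dots> = 1" using d1 d2 p by simp
  finally show ?thesis using p unfolding gd hd SL2_mult_def SL2_def by auto
qed


lemma SL2_generated:
  assumes p: "prime p" "p > 2"
  and s: "s_gen p \<in> A" and t: "t_gen p \<in> A"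
  and cl: "\<And>g h. g \<in> A \<Longrightarrow> h \<in> A \<Longrightarrow> SL2_mult p g h \<in> A"
  and g: "g \<in> SL2 p"
  shows "g \<in> A"
proof -
  define P where "P = int p"
  have P1: "P > 1" using p unfolding P_def by simp
  have Pprime: "prime P" using p unfolding P_def by simp
  have one_mod: "1 mod P = 1" using P1 by simp
  define U where "U x = (1::int, x mod P, 0::int, 1::int)" for x
  have Un: "U (int n) \<in> A" if "n \<ge> 1" for n
    using that
  proof (induction n rule: dec_induct)
    case base
    have "U (int 1) = t_gen p" unfolding U_def t_gen_def using one_mod by simp
    thus ?case using t by simp
  next
    case (step n)
    have "SL2_mult p (U (int n)) (t_gen p) = U (int (Suc n))"
      unfolding U_def t_gen_def SL2_mult_def P_def[symmetric] using one_mod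
      by (simp add: mod_simps add.commute)
    thus ?case using cl[OF step.IH t] by simp
  qed
  have UA: "U x \<in> A" for x
  proof -
    define n where "n = nat ((x - 1) mod P) + 1"
    have "int n = (x - 1) mod P + 1" unfolding n_def using P1 by simp
    hence "U (int n) = U x" unfolding U_def by (simp add: mod_simps)
    thus ?thesis using Un[of n] unfolding n_def by simp
  qed
  have Pm1: "(P - 1) mod P = P - 1" using P1 by (intro mod_pos_pos_trivial) auto
  have Pm1sq: "((P - 1) * (P - 1)) mod P = 1"
  proof -
    have "(P - 1) * (P - 1) = 1 + P * (P - 2)" by (simp add: algebra_simps)
    thus ?thesis using one_mod by simp
  qed
  have sP: "s_gen p = (0, P - 1, 1, 0)" unfolding s_gen_def P_def ..
  define s3 where "s3 = (0::int, 1::int, P - 1, 0::int)"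
  have s3A: "s3 \<in> A"
  proof -
    have "SL2_mult p (SL2_mult p (s_gen p) (s_gen p)) (s_gen p) = s3"
      unfolding sP s3_def SL2_mult_def P_def[symmetric] using Pm1 Pm1sq one_mod by simp
    thus ?thesis using cl[OF cl[OF s s] s] by simp
  qed
  define L where "L x = (1::int, 0::int, x mod P, 1::int)" for x
  have LA: "L x \<in> A" for x
  proof -
    have e1: "((P - 1) * ((- x) mod P)) mod P = x mod P"
    proof -
      have "((P - 1) * ((- x) mod P)) mod P = ((P - 1) * (- x)) mod P" by (simp add: mod_simps)
      also have "(P - 1) * (- x) = x + P * (- x)" by (simp add: algebra_simps)
      also have "(x + P * (- x)) mod P = x mod P" by (rule mod_mult_self2)
      finally show ?thesis .
    qed
    have "SL2_mult p (SL2_mult p s3 (U (- x))) (s_gen p) = L x"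
      unfolding sP s3_def U_def L_def SL2_mult_def P_def[symmetric] using Pm1 Pm1sq one_mod e1
      by (simp add: mod_simps)
    thus ?thesis using cl[OF cl[OF s3A UA[of "- x"]] s] by simp
  qed
  have main: "h \<in> A" if h: "h \<in> SL2 p" and hc: "fst (snd (snd h)) \<noteq> 0" for h
  proof -
    obtain a b c d where hd: "h = (a,b,c,d)" by (cases h) auto
    have rng: "a \<in> {0..<P}" "b \<in> {0..<P}" "c \<in> {0..<P}" "d \<in> {0..<P}" and det: "(a*d - b*c) mod P = 1"
      using h unfolding hd SL2_def P_def by auto
    have c0: "c \<noteq> 0" using hc hd by simp
    have ndvd: "\<not> P dvd c" using rng(3) c0 by (auto dest: zdvd_imp_le)
    have "coprime c P" using prime_imp_coprime[OF Pprime ndvd] by (simp add: coprime_commute)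
    then obtain ci where "[c * ci = 1] (mod P)" using cong_solve_coprime_int by blast
    hence k: "P dvd c * ci - 1" by (simp add: cong_iff_dvd_diff)
    have detd: "P dvd a * d - b * c - 1"
      using det one_mod by (metis mod_eq_dvd_iff)
    define u where "u = (a - 1) * ci"
    define v where "v = (d - 1) * ci"
    have r: "SL2_mult p (SL2_mult p (U u) (L c)) (U v) =
        ((1 + u * c) mod P, ((1 + u * c) * v + u) mod P, c mod P, (c * v + 1) mod P)"
      unfolding U_def L_def SL2_mult_def P_def[symmetric]
      by (simp add: mod_simps) (intro conjI; simp only: cong_def[symmetric]; intro cong_add cong_mult cong_mod_leftI cong_refl)
    have m: "x mod P = x" if "x \<in> {0..<P}" for x using that by simp
    have e1: "(1 + u * c) mod P = a"
    proof -
      have "P dvd (1 + u * c) - a"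
      proof -
        have "(1 + u * c) - a = (a - 1) * (c * ci - 1)" unfolding u_def by (simp add: algebra_simps)
        thus ?thesis using k by simp
      qed
      thus ?thesis using m[OF rng(1)] by (metis mod_eq_dvd_iff)
    qed
    have e4: "(c * v + 1) mod P = d"
    proof -
      have "P dvd (c * v + 1) - d"
      proof -
        have "(c * v + 1) - d = (d - 1) * (c * ci - 1)" unfolding v_def by (simp add: algebra_simps)
        thus ?thesis using k by simp
      qed
      thus ?thesis using m[OF rng(4)] by (metis mod_eq_dvd_iff)
    qed
    have e2: "((1 + u * c) * v + u) mod P = b"
    proof -
      have eq: "c * (((1 + u * c) * v + u) - b) = (a * d - b * c - 1) + (c * ci - 1) * ((a - 1) * (d - 1) * (c * ci) + a * d - 1)"
        unfolding u_def v_def by (simp add: algebra_simps)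
      have "P dvd c * (((1 + u * c) * v + u) - b)" unfolding eq using k detd by simp
      hence "P dvd ((1 + u * c) * v + u) - b" using ndvd Pprime by (simp add: prime_dvd_mult_iff)
      thus ?thesis using m[OF rng(2)] by (metis mod_eq_dvd_iff)
    qed
    have "SL2_mult p (SL2_mult p (U u) (L c)) (U v) = h"
      unfolding r hd using e1 e2 e4 m[OF rng(3)] by simp
    thus ?thesis using cl[OF cl[OF UA[of u] LA[of c]] UA[of v]] by simp
  qed
  show ?thesis
  proof (cases "fst (snd (snd g)) = 0")
    case False thus ?thesis using main g by blast
  next
    case True
    obtain a b c d where gd: "g = (a,b,c,d)" by (cases g) auto
    have rng: "a \<in> {0..<P}" "b \<in> {0..<P}" "c \<in> {0..<P}" "d \<in> {0..<P}" and det: "(a*d - b*c) mod P = 1"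
      using g unfolding gd SL2_def P_def by auto
    have c0: "c = 0" using True gd by simp
    have d0: "d \<noteq> 0" using det c0 one_mod P1 by auto
    have gs: "SL2_mult p g (s_gen p) \<in> SL2 p"
      by (rule SL2_closed) (use p g in \<open>auto simp: s_gen_def SL2_def\<close>)
    have gsA: "SL2_mult p g (s_gen p) \<in> A"
      by (rule main[OF gs]) (use d0 rng in \<open>simp add: gd sP SL2_mult_def P_def[symmetric]\<close>)
    have aa: "(a * (P - 1) * (P - 1)) mod P = a"
    proof -
      have "(a * (P - 1) * (P - 1)) mod P = (a * (((P - 1) * (P - 1)) mod P)) mod P"
        by (simp add: mod_mult_right_eq mult.assoc)
      also have "\<dots> = a" using Pm1sq rng(1) by simp
      finally show ?thesis .
    qed
    have "SL2_mult p (SL2_mult p g (s_gen p)) s3 = g"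
      unfolding gd sP s3_def SL2_mult_def P_def[symmetric] using rng c0 Pm1 Pm1sq one_mod aa
      by (simp add: mod_simps)
    thus ?thesis using cl[OF gsA s3A] by simp
  qed
qed

definition pmat :: "nat \<Rightarrow> (nat \<Rightarrow> nat) \<Rightarrow> complex mat" where
  "pmat n \<pi> = mat n n (\<lambda>(i, j). if \<pi> i = j then 1 else 0)"

lemma perm_lt: "\<pi> permutes {..<n} \<Longrightarrow> i < n \<Longrightarrow> \<pi> i < n"
  using permutes_in_image[of \<pi> "{..<n}" i] by simp

lemma perm_inv_lt: "\<pi> permutes {..<n} \<Longrightarrow> i < n \<Longrightarrow> inv_into UNIV \<pi> i < n"
  using perm_lt[OF permutes_inv] by blast

lemma pmat_carrier: "pmat n \<pi> \<in> carrier_mat n n" unfolding pmat_def by simp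

lemma pmat_left:
  assumes "\<pi> permutes {..<n}" "M \<in> carrier_mat n m"
  shows "pmat n \<pi> * M = mat n m (\<lambda>(i, j). M $$ (\<pi> i, j))"
proof (rule eq_matI)
  fix i j assume ij: "i < dim_row (mat n m (\<lambda>(i, j). M $$ (\<pi> i, j)))" "j < dim_col (mat n m (\<lambda>(i, j). M $$ (\<pi> i, j)))"
  hence i: "i < n" and j: "j < m" by auto
  have pi: "\<pi> i < n" using perm_lt[OF assms(1) i] .
  have "(pmat n \<pi> * M) $$ (i, j) = (\<Sum>l\<in>{0..<n}. (if \<pi> i = l then 1 else 0) * M $$ (l, j))"
    using i j assms(2) by (simp add: pmat_def scalar_prod_def)
  also have "\<dots> = (\<Sum>l\<in>{0..<n}. if \<pi> i = l then M $$ (l, j) else 0)"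
    by (rule sum.cong) auto
  also have "\<dots> = M $$ (\<pi> i, j)" using pi by simp
  finally show "(pmat n \<pi> * M) $$ (i, j) = mat n m (\<lambda>(i, j). M $$ (\<pi> i, j)) $$ (i, j)"
    using i j by simp
qed (use assms in \<open>auto simp: pmat_def\<close>)

lemma pmat_right:
  assumes "\<pi> permutes {..<n}" "M \<in> carrier_mat m n"
  shows "M * pmat n \<pi> = mat m n (\<lambda>(i, j). M $$ (i, inv_into UNIV \<pi> j))"
proof (rule eq_matI)
  fix i j assume ij: "i < dim_row (mat m n (\<lambda>(i, j). M $$ (i, inv_into UNIV \<pi> j)))" "j < dim_col (mat m n (\<lambda>(i, j). M $$ (i, inv_into UNIV \<pi> j)))"
  hence i: "i < m" and j: "j < n" by auto
  have pi: "inv_into UNIV \<pi> j < n" using perm_inv_lt[OF assms(1) j] .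
  have "(M * pmat n \<pi>) $$ (i, j) = (\<Sum>l\<in>{0..<n}. M $$ (i, l) * (if \<pi> l = j then 1 else 0))"
    using i j assms(2) by (simp add: pmat_def scalar_prod_def)
  also have "\<dots> = (\<Sum>l\<in>{0..<n}. if l = inv_into UNIV \<pi> j then M $$ (i, l) else 0)"
    by (rule sum.cong) (auto simp: permutes_inv_eq[OF assms(1)] permutes_inverses[OF assms(1)])
  also have "\<dots> = M $$ (i, inv_into UNIV \<pi> j)" using pi by simp
  finally show "(M * pmat n \<pi>) $$ (i, j) = mat m n (\<lambda>(i, j). M $$ (i, inv_into UNIV \<pi> j)) $$ (i, j)"
    using i j by simp
qed (use assms in \<open>auto simp: pmat_def\<close>)

lemma conj_pmat:
  assumes "\<pi> permutes {..<n}" "M \<in> carrier_mat n n"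
    and "\<And>i l. i < n \<Longrightarrow> l < n \<Longrightarrow> f (M $$ (i, l)) = M $$ (\<pi> i, \<pi> l)"
  shows "map_mat f M * pmat n \<pi> = pmat n \<pi> * M"
proof -
  have "map_mat f M * pmat n \<pi> = mat n n (\<lambda>(i, j). f (M $$ (i, inv_into UNIV \<pi> j)))"
  proof -
    have inv: "inv_into UNIV \<pi> j < n" if "j < n" for j
    proof -
      show ?thesis using perm_inv_lt[OF assms(1) that] .
    qed
    show ?thesis using assms(1,2) inv by (subst pmat_right) (auto intro!: eq_matI)
  qed
  also have "\<dots> = mat n n (\<lambda>(i, j). M $$ (\<pi> i, j))"
  proof (rule eq_matI)
    fix i j assume "i < dim_row (mat n n (\<lambda>(i, j). M $$ (\<pi> i, j)))" "j < dim_col (mat n n (\<lambda>(i, j). M $$ (\<pi> i, j)))"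
    hence i: "i < n" and j: "j < n" by auto
    have "inv_into UNIV \<pi> j < n" using perm_inv_lt[OF assms(1) j] .
    thus "mat n n (\<lambda>(i, j). f (M $$ (i, inv_into UNIV \<pi> j))) $$ (i, j) = mat n n (\<lambda>(i, j). M $$ (\<pi> i, j)) $$ (i, j)"
      using i j assms(3)[of i "inv_into UNIV \<pi> j"] by (simp add: permutes_inverses[OF assms(1)])
  qed auto
  also have "\<dots> = pmat n \<pi> * M" using assms by (simp add: pmat_left)
  finally show ?thesis .
qed

context galp begin
lemma map_mat_mult:
  assumes A: "A \<in> carrier_mat n m" and B: "B \<in> carrier_mat m k"
    and AF: "\<And>i j. i < n \<Longrightarrow> j < m \<Longrightarrow> A $$ (i, j) \<in> F"
    and BF: "\<And>i j. i < m \<Longrightarrow> j < k \<Longrightarrow> B $$ (i, j) \<in> F"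
  shows "map_mat \<sigma> (A * B) = map_mat \<sigma> A * map_mat \<sigma> B"
proof (rule eq_matI)
  fix i j assume "i < dim_row (map_mat \<sigma> A * map_mat \<sigma> B)" "j < dim_col (map_mat \<sigma> A * map_mat \<sigma> B)"
  hence i: "i < n" and j: "j < k" using A B by auto
  have "map_mat \<sigma> (A * B) $$ (i, j) = \<sigma> (\<Sum>l\<in>{0..<m}. A $$ (i, l) * B $$ (l, j))"
    using i j A B by (simp add: scalar_prod_def)
  also have "\<dots> = (\<Sum>l\<in>{0..<m}. \<sigma> (A $$ (i, l) * B $$ (l, j)))"
    by (rule sum) (use i j AF BF in \<open>auto intro: cyc_mult\<close>)
  also have "\<dots> = (\<Sum>l\<in>{0..<m}. \<sigma> (A $$ (i, l)) * \<sigma> (B $$ (l, j)))"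
    by (rule sum.cong) (use i j AF BF in \<open>auto simp: mult\<close>)
  also have "\<dots> = (map_mat \<sigma> A * map_mat \<sigma> B) $$ (i, j)"
    using i j A B by (simp add: scalar_prod_def)
  finally show "map_mat \<sigma> (A * B) $$ (i, j) = (map_mat \<sigma> A * map_mat \<sigma> B) $$ (i, j)" .
qed (use A B in auto)
end

locale ctx =
  fixes p :: nat and c :: int and \<gamma> :: "complex \<Rightarrow> complex"
  assumes prime: "prime p" and odd: "odd p" and cnd: "c = 1 \<or> \<not> QuadRes (int p) c"
    and gam: "\<gamma> \<in> gal p"
begin

abbreviation "P \<equiv> int p"
definition "r = (p - 1) div 2"

lemma p2: "p > 2"
proof -
  have "p \<ge> 2" using prime prime_ge_2_nat by blast
  moreover have "p \<noteq> 2" using odd by auto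
  ultimately show ?thesis by simp
qed
lemma p0: "p > 0" using p2 by simp
lemma Pprime: "prime P" using prime by simp
lemma r_p: "p = 2 * r + 1" unfolding r_def using odd p2 by (auto elim!: oddE)
lemma r1: "r \<ge> 1" using r_p p2 by simp

lemma c_ndvd: "\<not> P dvd c"
proof
  assume d: "P dvd c"
  show False
  proof (cases "c = 1")
    case True thus False using d p2 by simp
  next
    case False
    hence "\<not> QuadRes P c" using cnd by simp
    moreover have "[0 ^ 2 = c] (mod P)" using d by (simp add: cong_def)
    ultimately show False unfolding QuadRes_def by blast
  qed
qed

lemma Zeq: "Z p m = Z p n \<longleftrightarrow> [m = n] (mod P)"
  using Z_eq[OF p0] unfolding cong_def .

lemma sq_pm: assumes "[x^2 = y^2] (mod P)" shows "[x = y] (mod P) \<or> [x = - y] (mod P)"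
proof -
  have "P dvd (x - y) * (x + y)" using assms unfolding cong_iff_dvd_diff
    by (simp add: algebra_simps power2_eq_square)
  hence "P dvd x - y \<or> P dvd x + y" using Pprime by (simp add: prime_dvd_mult_iff)
  thus ?thesis unfolding cong_iff_dvd_diff by simp
qed

lemma small_eq: assumes "j \<le> r" "k \<le> r" "[int j ^ 2 = int k ^ 2] (mod P)" shows "j = k"
proof -
  have jk: "int j + int k < P" using assms(1,2) r_p by simp
  from sq_pm[OF assms(3)] have "P dvd int j - int k \<or> P dvd int j + int k"
    unfolding cong_iff_dvd_diff by simp
  thus ?thesis
  proof
    assume d: "P dvd int j - int k"
    show ?thesis
    proof (rule ccontr)
      assume "j \<noteq> k"
      hence "\<bar>int j - int k\<bar> > 0" by simp
      moreover have "\<bar>int j - int k\<bar> < P" using jk by simp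
      moreover have "P dvd \<bar>int j - int k\<bar>" using d by simp
      ultimately show False using zdvd_not_zless by blast
    qed
  next
    assume d: "P dvd int j + int k"
    show ?thesis
    proof (rule ccontr)
      assume "j \<noteq> k"
      hence "int j + int k > 0" by simp
      thus False using d jk zdvd_not_zless by blast
    qed
  qed
qed

lemma cancel: assumes "\<not> P dvd u" "[u * x = u * y] (mod P)" shows "[x = y] (mod P)"
proof -
  have "P dvd u * (x - y)" using assms(2) unfolding cong_iff_dvd_diff by (simp add: algebra_simps)
  thus ?thesis using assms(1) Pprime unfolding cong_iff_dvd_diff by (simp add: prime_dvd_mult_iff)
qed

interpretation g: galp p \<gamma> by unfold_locales (rule gam)

definition "a = (SOME a. 0 < a \<and> a < p \<and> \<gamma> (zeta p) = zeta p ^ a)"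
lemma a_props: "0 < a" "a < p" "\<gamma> (zeta p) = zeta p ^ a"
proof -
  have "\<exists>a. 0 < a \<and> a < p \<and> \<gamma> (zeta p) = zeta p ^ a" using g.zeta_img p2 by simp
  from someI_ex[OF this] show "0 < a" "a < p" "\<gamma> (zeta p) = zeta p ^ a" unfolding a_def by blast+
qed

abbreviation "A \<equiv> int a"
lemma A_ndvd: "\<not> P dvd A"
  using a_props(1,2) zdvd_not_zless[of A P] by simp

definition "\<tau> = \<gamma> \<circ> \<gamma>"
lemma tau_gal: "\<tau> \<in> gal p" unfolding \<tau>_def by (rule gal_comp[OF gam gam])

sublocale t: galp p \<tau> by unfold_locales (rule tau_gal)

lemma tau_Z: "\<tau> (Z p m) = Z p (A * A * m)"
  unfolding \<tau>_def using g.Z_img[OF p0 a_props(3)] by (simp add: mult.assoc)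

lemma theta_Z: "theta p c j = Z p (c * int j ^ 2)"
  unfolding theta_def Qf_def by (rule e_Z[OF p0])

lemma Bf_eq: "Bf p c x y = real_of_int (2 * c * x * y) / real p"
proof -
  have "c * (x + y)^2 - c * x^2 - c * y^2 = 2 * c * x * y" by (simp add: algebra_simps power2_eq_square)
  hence "real_of_int (2 * c * x * y) = real_of_int (c * (x + y)^2) - real_of_int (c * x^2) - real_of_int (c * y^2)"
    by (metis of_int_diff)
  thus ?thesis unfolding Bf_def Qf_def by (simp add: diff_divide_distrib)
qed

lemma eB: "e (Bf p c x y) = Z p (2 * c * x * y)"
  unfolding Bf_eq by (rule e_Z[OF p0])
lemma emB: "e (- Bf p c x y) = Z p (- (2 * c * x * y))"
proof -
  have "- Bf p c x y = real_of_int (- (2 * c * x * y)) / real p" unfolding Bf_eq by simp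
  show ?thesis unfolding \<open>- Bf p c x y = real_of_int (- (2 * c * x * y)) / real p\<close> by (rule e_Z[OF p0])
qed

lemma gauss_Z: "gauss p c = (\<Sum>x\<in>{0..<P}. Z p (c * x ^ 2))"
  unfolding gauss_def Qf_def by (rule sum.cong[OF refl]) (rule e_Z[OF p0])

lemma theta_inj: assumes "j \<le> r" "k \<le> r" "theta p c j = theta p c k" shows "j = k"
proof -
  have "[c * int j ^ 2 = c * int k ^ 2] (mod P)" using assms(3) unfolding theta_Z Zeq .
  hence "[int j ^ 2 = int k ^ 2] (mod P)" by (rule cancel[OF c_ndvd])
  thus ?thesis using small_eq assms by blast
qed

lemma theta_0: "theta p c 0 = 1" unfolding theta_Z using Z_zero[OF p0] by simp

definition "pz j = (let m = (A * int j) mod P in nat (if m \<le> int r then m else P - m))"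
definition "pp j = (if j \<le> r then pz j else j)"

lemma pp_le: "j \<le> r \<Longrightarrow> pp j \<le> r"
  unfolding pp_def pz_def Let_def using r_p p0 by auto

lemma pp_cong: assumes "j \<le> r" shows "[int (pp j) = A * int j] (mod P) \<or> [int (pp j) = - (A * int j)] (mod P)"
proof -
  define m where "m = (A * int j) mod P"
  have m0: "0 \<le> m" "m < P" unfolding m_def using p0 by auto
  have mc: "[m = A * int j] (mod P)" unfolding m_def cong_def by simp
  show ?thesis
  proof (cases "m \<le> int r")
    case True
    hence "int (pp j) = m" using assms m0 unfolding pp_def pz_def Let_def m_def[symmetric] by simp
    thus ?thesis using mc by simp
  next
    case False
    hence "int (pp j) = P - m" using assms m0 unfolding pp_def pz_def Let_def m_def[symmetric] by simp
    moreover have "[P - m = - (A * int j)] (mod P)"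
    proof -
      have "[P - m = 0 - m] (mod P)" by (intro cong_diff) (auto simp: cong_def)
      thus ?thesis using cong_minus_minus_iff mc by (metis cong_trans diff_0)
    qed
    ultimately show ?thesis by simp
  qed
qed

lemma pp_sq: assumes "j \<le> r" shows "[int (pp j) ^ 2 = A * A * int j ^ 2] (mod P)"
proof -
  have "A * A * int j ^ 2 = (A * int j) ^ 2" "A * A * int j ^ 2 = (- (A * int j)) ^ 2"
    by (simp_all add: power2_eq_square)
  thus ?thesis using pp_cong[OF assms] by (metis cong_pow)
qed

lemma pp_inj: assumes "j \<le> r" "k \<le> r" "pp j = pp k" shows "j = k"
proof -
  have "[A * A * int j ^ 2 = A * A * int k ^ 2] (mod P)"
    using pp_sq[OF assms(1)] pp_sq[OF assms(2)] assms(3) by (metis cong_sym cong_trans)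
  hence "[A * (A * int j ^ 2) = A * (A * int k ^ 2)] (mod P)" by (simp add: mult.assoc)
  hence "[A * int j ^ 2 = A * int k ^ 2] (mod P)" by (rule cancel[OF A_ndvd])
  hence "[int j ^ 2 = int k ^ 2] (mod P)" by (rule cancel[OF A_ndvd])
  thus ?thesis using small_eq assms by blast
qed

lemma pp_img: "pp ` {..<r+1} = {..<r+1}"
proof (rule endo_inj_surj)
  show "pp ` {..<r+1} \<subseteq> {..<r+1}" using pp_le by (auto simp: less_Suc_eq_le)
  show "inj_on pp {..<r+1}" using pp_inj by (auto simp: inj_on_def less_Suc_eq_le)
qed simp

lemma pp_permutes: "pp permutes {..<r+1}"
proof (rule bij_imp_permutes)
  show "bij_betw pp {..<r+1} {..<r+1}"
    unfolding bij_betw_def using pp_img pp_inj by (auto simp: inj_on_def less_Suc_eq_le)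
  show "\<And>x. x \<notin> {..<r+1} \<Longrightarrow> pp x = x" unfolding pp_def by auto
qed

lemma tau_theta: assumes "j \<le> r" shows "\<tau> (theta p c j) = theta p c (pp j)"
proof -
  have "[c * (A * A * int j ^ 2) = c * int (pp j) ^ 2] (mod P)"
    using pp_sq[OF assms] by (intro cong_mult) (auto simp: cong_sym)
  thus ?thesis unfolding theta_Z tau_Z Zeq by (simp add: mult_ac)
qed

lemma tau_gauss: "\<tau> (gauss p c) = gauss p c"
proof -
  define h where "h x = (A * x) mod P" for x
  have hin: "h ` {0..<P} \<subseteq> {0..<P}" unfolding h_def using p0 by auto
  have hinj: "inj_on h {0..<P}"
  proof
    fix x y assume xy: "x \<in> {0..<P}" "y \<in> {0..<P}" "h x = h y"
    hence "[A * x = A * y] (mod P)" unfolding h_def cong_def by simp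
    hence "[x = y] (mod P)" by (rule cancel[OF A_ndvd])
    thus "x = y" using xy(1,2) by (simp add: cong_def)
  qed
  have himg: "h ` {0..<P} = {0..<P}" by (rule endo_inj_surj[OF _ hin hinj]) simp
  have "\<tau> (gauss p c) = (\<Sum>x\<in>{0..<P}. \<tau> (Z p (c * x ^ 2)))"
    unfolding gauss_Z by (rule t.sum) (rule cyc_Z)
  also have "\<dots> = (\<Sum>x\<in>{0..<P}. Z p (c * h x ^ 2))"
  proof (rule sum.cong[OF refl])
    fix x
    have "[c * h x ^ 2 = A * A * (c * x ^ 2)] (mod P)"
    proof -
      have "[h x = A * x] (mod P)" unfolding h_def cong_def by simp
      hence "[c * h x ^ 2 = c * (A * x) ^ 2] (mod P)" by (intro cong_mult cong_pow) auto
      thus ?thesis by (simp add: power2_eq_square mult_ac)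
    qed
    thus "\<tau> (Z p (c * x\<^sup>2)) = Z p (c * (h x)\<^sup>2)" unfolding tau_Z Zeq by (simp add: cong_sym)
  qed
  also have "\<dots> = (\<Sum>y\<in>h ` {0..<P}. Z p (c * y ^ 2))"
    by (simp add: sum.reindex[OF hinj])
  also have "\<dots> = gauss p c" unfolding himg gauss_Z ..
  finally show ?thesis .
qed


abbreviation "n \<equiv> r + 1"

lemma theta_F: "theta p c j \<in> cyc_field p" unfolding theta_Z by (rule cyc_Z)
lemma gauss_F: "gauss p c \<in> cyc_field p" unfolding gauss_Z by (rule cyc_sum) (rule cyc_Z)

lemma V_carrier: "Vmat p c \<in> carrier_mat n n" unfolding Vmat_def Let_def r_def by simp
lemma V_idx: "i < n \<Longrightarrow> k < n \<Longrightarrow> Vmat p c $$ (i, k) = theta p c i ^ k"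
  unfolding Vmat_def Let_def r_def[symmetric] by simp
lemma S_carrier: "Smat p c \<in> carrier_mat n n" unfolding Smat_def Let_def r_def by simp
lemma S_idx: "i < n \<Longrightarrow> k < n \<Longrightarrow> Smat p c $$ (i, k) =
       (if k = 0 then 1 / gauss p c
       else if i = 0 then 2 / gauss p c
       else (e (- Bf p c (int i) (int k)) + e (Bf p c (int i) (int k))) / gauss p c)"
  unfolding Smat_def Let_def r_def[symmetric] by simp
lemma T_carrier: "Tmat p c \<in> carrier_mat n n" unfolding Tmat_def Let_def r_def by simp
lemma T_idx: "i < n \<Longrightarrow> k < n \<Longrightarrow> Tmat p c $$ (i, k) = (if i = k then theta p c i else 0)"
  unfolding Tmat_def Let_def r_def[symmetric] by simp

lemma tau_V: "map_mat \<tau> (Vmat p c) = pmat n pp * Vmat p c"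
proof -
  have "pmat n pp * Vmat p c = mat n n (\<lambda>(i, j). Vmat p c $$ (pp i, j))"
    by (rule pmat_left[OF pp_permutes V_carrier])
  also have "\<dots> = map_mat \<tau> (Vmat p c)"
  proof (rule eq_matI)
    fix i j assume "i < dim_row (map_mat \<tau> (Vmat p c))" "j < dim_col (map_mat \<tau> (Vmat p c))"
    hence i: "i < n" and j: "j < n" using V_carrier by auto
    have "pp i < n" using pp_le[of i] i by simp
    thus "mat n n (\<lambda>(i, j). Vmat p c $$ (pp i, j)) $$ (i, j) = map_mat \<tau> (Vmat p c) $$ (i, j)"
      using i j V_carrier by (simp add: V_idx t.pow theta_F tau_theta)
  qed (use V_carrier in auto)
  finally show ?thesis ..
qed

lemma perm_unique:
  assumes "perm_mat n Q" "map_mat \<tau> (Vmat p c) = Q * Vmat p c"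
  shows "Q = pmat n pp"
proof -
  obtain \<pi> where pi: "\<pi> permutes {..<n}" and Q: "Q = pmat n \<pi>"
    using assms(1) unfolding perm_mat_def pmat_def by blast
  have eq: "\<pi> j = pp j" if j: "j < n" for j
  proof -
    have r1': "1 < n" using r1 by simp
    have "map_mat \<tau> (Vmat p c) $$ (j, 1) = (Q * Vmat p c) $$ (j, 1)" using assms(2) by simp
    also have "(Q * Vmat p c) $$ (j, 1) = Vmat p c $$ (\<pi> j, 1)"
      unfolding Q pmat_left[OF pi V_carrier] using j r1' by simp
    finally have "\<tau> (theta p c j) = theta p c (\<pi> j)"
      using j r1' perm_lt[OF pi j] V_carrier by (simp add: V_idx)
    hence "theta p c (pp j) = theta p c (\<pi> j)" using tau_theta j by simp
    thus ?thesis using theta_inj pp_le j perm_lt[OF pi j] by (metis Suc_eq_plus1 less_Suc_eq_le)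
  qed
  have "\<pi> = pp"
  proof
    fix j show "\<pi> j = pp j"
    proof (cases "j < n")
      case True thus ?thesis by (rule eq)
    next
      case False
      hence "j \<notin> {..<n}" by simp
      thus ?thesis using permutes_not_in[OF pi] permutes_not_in[OF pp_permutes] by metis
    qed
  qed
  thus ?thesis using Q by simp
qed

lemma pp0: "pp 0 = 0" unfolding pp_def pz_def by simp
lemma pp_nz: "i \<le> r \<Longrightarrow> i \<noteq> 0 \<Longrightarrow> pp i \<noteq> 0" using pp_inj[of i 0] pp0 by auto

lemma tau_T: "i < n \<Longrightarrow> l < n \<Longrightarrow> \<tau> (Tmat p c $$ (i, l)) = Tmat p c $$ (pp i, pp l)"
proof -
  assume i: "i < n" and l: "l < n"
  have pi: "pp i < n" "pp l < n" using pp_le i l by (simp_all add: less_Suc_eq_le)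
  have "pp i = pp l \<longleftrightarrow> i = l" using pp_inj i l by (auto simp: less_Suc_eq_le)
  thus ?thesis using i l pi by (simp add: T_idx t.zero tau_theta less_Suc_eq_le)
qed

lemma tau_S: "i < n \<Longrightarrow> l < n \<Longrightarrow> \<tau> (Smat p c $$ (i, l)) = Smat p c $$ (pp i, pp l)"
proof -
  assume i: "i < n" and l: "l < n"
  have pi: "pp i < n" "pp l < n" using pp_le i l by (simp_all add: less_Suc_eq_le)
  define G where "G = gauss p c"
  have G: "G \<in> cyc_field p" "\<tau> G = G" unfolding G_def by (rule gauss_F, rule tau_gauss)
  have t1: "\<tau> (1 / G) = 1 / G" using G by (simp add: t.divide cyc_1 t.one)
  have t2: "\<tau> (2 / G) = 2 / G" using G by (simp add: t.divide cyc_2 t.two)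
  show ?thesis
  proof (cases "l = 0")
    case True thus ?thesis using i l pi by (simp add: S_idx pp0 t1 G_def[symmetric])
  next
    case l0: False
    hence pl0: "pp l \<noteq> 0" using pp_nz l by (simp add: less_Suc_eq_le)
    show ?thesis
    proof (cases "i = 0")
      case True thus ?thesis using i l pi l0 pl0 by (simp add: S_idx pp0 t2 G_def[symmetric])
    next
      case i0: False
      hence pi0: "pp i \<noteq> 0" using pp_nz i by (simp add: less_Suc_eq_le)
      define x where "x = 2 * c * int i * int l"
      define y where "y = 2 * c * int (pp i) * int (pp l)"
      have lhs: "\<tau> (Smat p c $$ (i, l)) = (Z p (A * A * (- x)) + Z p (A * A * x)) / G"
        using i l i0 l0 G by (simp add: S_idx G_def[symmetric] eB emB x_def[symmetric] t.divide t.add cyc_Z cyc_add tau_Z)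
      have rhs: "Smat p c $$ (pp i, pp l) = (Z p (- y) + Z p y) / G"
        using pi pi0 pl0 by (simp add: S_idx G_def[symmetric] eB emB y_def[symmetric])
      have sq: "[(int (pp i) * int (pp l)) ^ 2 = (A * A * int i * int l) ^ 2] (mod P)"
      proof -
        have "[int (pp i) ^ 2 * int (pp l) ^ 2 = (A * A * int i ^ 2) * (A * A * int l ^ 2)] (mod P)"
          using pp_sq i l by (intro cong_mult) (auto simp: less_Suc_eq_le)
        thus ?thesis by (simp add: power2_eq_square mult_ac)
      qed
      from sq_pm[OF sq] show ?thesis
      proof
        assume h: "[int (pp i) * int (pp l) = A * A * int i * int l] (mod P)"
        have "[y = A * A * x] (mod P)"
          using cong_mult[OF cong_refl[of "2 * c"] h] unfolding x_def y_def by (simp add: mult_ac)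
        hence "Z p y = Z p (A * A * x)" "Z p (- y) = Z p (A * A * (- x))"
          unfolding Zeq by (auto simp: cong_minus_minus_iff)
        thus ?thesis using lhs rhs by simp
      next
        assume h: "[int (pp i) * int (pp l) = - (A * A * int i * int l)] (mod P)"
        have "[y = A * A * (- x)] (mod P)"
          using cong_mult[OF cong_refl[of "2 * c"] h] unfolding x_def y_def by (simp add: mult_ac)
        hence yy: "[y = A * A * (- x)] (mod P)" .
        have "[- y = - (A * A * (- x))] (mod P)" using yy by (simp only: cong_minus_minus_iff)
        hence "Z p y = Z p (A * A * (- x))" "Z p (- y) = Z p (A * A * x)"
          using yy unfolding Zeq by simp_all
        thus ?thesis using lhs rhs by (simp add: add.commute)
      qed
    qed
  qed
qed

end

context ctx begin

lemma s_in: "s_gen p \<in> SL2 p"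
proof -
  have "(1 + P * (- 1)) mod P = 1" using p2 by (subst mod_mult_self2) simp
  hence "(0 * 0 - (P - 1) * 1) mod P = 1" by simp
  thus ?thesis unfolding s_gen_def SL2_def using p2 by auto
qed

lemma t_in: "t_gen p \<in> SL2 p"
  unfolding t_gen_def SL2_def using p2 by auto

lemma conj_all:
  assumes xi: "is_xi p c \<xi>" and inv1: "pmat n pp * Pinv = 1\<^sub>m n" and inv2: "Pinv * pmat n pp = 1\<^sub>m n"
    and Pinv: "Pinv \<in> carrier_mat n n"
  shows "\<forall>g\<in>SL2 p. map_mat \<tau> (\<xi> g) = pmat n pp * \<xi> g * Pinv"
proof
  define Q where "Q = pmat n pp"
  have Q: "Q \<in> carrier_mat n n" unfolding Q_def by (rule pmat_carrier)
  have X: "\<And>g. g \<in> SL2 p \<Longrightarrow> \<xi> g \<in> carrier_mat n n"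
    and XF: "\<And>g i j. g \<in> SL2 p \<Longrightarrow> i < n \<Longrightarrow> j < n \<Longrightarrow> \<xi> g $$ (i, j) \<in> cyc_field p"
    and Xm: "\<And>g h. g \<in> SL2 p \<Longrightarrow> h \<in> SL2 p \<Longrightarrow> \<xi> (SL2_mult p g h) = \<xi> g * \<xi> h"
    and Xs: "\<xi> (s_gen p) = Smat p c" and Xt: "\<xi> (t_gen p) = Tmat p c"
    using xi unfolding is_xi_def Let_def r_def[symmetric] by blast+
  have conj_to: "M' = Q * M * Pinv" if "M' \<in> carrier_mat n n" "M \<in> carrier_mat n n" "M' * Q = Q * M" for M M'
  proof -
    have "Q * M * Pinv = M' * Q * Pinv" using that by simp
    also have "\<dots> = M' * (Q * Pinv)" using that(1) Q Pinv by (rule assoc_mult_mat)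
    also have "\<dots> = M'" using inv1 that unfolding Q_def by simp
    finally show ?thesis ..
  qed
  define Good where "Good = {g \<in> SL2 p. map_mat \<tau> (\<xi> g) = Q * \<xi> g * Pinv}"
  have sG: "s_gen p \<in> Good"
  proof -
    have "map_mat \<tau> (Smat p c) = Q * Smat p c * Pinv"
    proof (rule conj_to)
      show "Smat p c \<in> carrier_mat n n" by (rule S_carrier)
      thus "map_mat \<tau> (Smat p c) \<in> carrier_mat n n" by simp
      show "map_mat \<tau> (Smat p c) * Q = Q * Smat p c"
        unfolding Q_def by (rule conj_pmat[OF pp_permutes S_carrier tau_S])
    qed
    thus ?thesis unfolding Good_def using s_in Xs by simp
  qed
  have tG: "t_gen p \<in> Good"
  proof -
    have "map_mat \<tau> (Tmat p c) = Q * Tmat p c * Pinv"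
    proof (rule conj_to)
      show "Tmat p c \<in> carrier_mat n n" by (rule T_carrier)
      thus "map_mat \<tau> (Tmat p c) \<in> carrier_mat n n" by simp
      show "map_mat \<tau> (Tmat p c) * Q = Q * Tmat p c"
        unfolding Q_def by (rule conj_pmat[OF pp_permutes T_carrier tau_T])
    qed
    thus ?thesis unfolding Good_def using t_in Xt by simp
  qed
  have cl: "SL2_mult p g h \<in> Good" if g: "g \<in> Good" and h: "h \<in> Good" for g h
  proof -
    have gS: "g \<in> SL2 p" and hS: "h \<in> SL2 p" and eg: "map_mat \<tau> (\<xi> g) = Q * \<xi> g * Pinv"
      and eh: "map_mat \<tau> (\<xi> h) = Q * \<xi> h * Pinv" using g h unfolding Good_def by auto
    have Xg: "\<xi> g \<in> carrier_mat n n" and Xh: "\<xi> h \<in> carrier_mat n n" using X gS hS by auto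
    have "map_mat \<tau> (\<xi> (SL2_mult p g h)) = map_mat \<tau> (\<xi> g * \<xi> h)" using Xm gS hS by simp
    also have "\<dots> = map_mat \<tau> (\<xi> g) * map_mat \<tau> (\<xi> h)"
      by (rule t.map_mat_mult[OF Xg Xh]) (use XF gS hS in auto)
    also have "\<dots> = (Q * \<xi> g * Pinv) * (Q * \<xi> h * Pinv)" using eg eh by simp
    also have "\<dots> = Q * (\<xi> g * \<xi> h) * Pinv"
    proof -
      have cQX: "Q * \<xi> g \<in> carrier_mat n n" using Q Xg by (rule mult_carrier_mat)
      have cQY: "Q * \<xi> h \<in> carrier_mat n n" using Q Xh by (rule mult_carrier_mat)
      have cQYP: "(Q * \<xi> h) * Pinv \<in> carrier_mat n n" using cQY Pinv by (rule mult_carrier_mat)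
      have a1: "((Q * \<xi> g) * Pinv) * ((Q * \<xi> h) * Pinv) = (Q * \<xi> g) * (Pinv * ((Q * \<xi> h) * Pinv))"
        by (rule assoc_mult_mat[OF cQX Pinv cQYP])
      have a2: "Pinv * ((Q * \<xi> h) * Pinv) = (Pinv * (Q * \<xi> h)) * Pinv"
        by (rule assoc_mult_mat[OF Pinv cQY Pinv, symmetric])
      have a3: "Pinv * (Q * \<xi> h) = \<xi> h"
      proof -
        have "Pinv * (Q * \<xi> h) = (Pinv * Q) * \<xi> h" by (rule assoc_mult_mat[OF Pinv Q Xh, symmetric])
        also have "Pinv * Q = 1\<^sub>m n" using inv2 unfolding Q_def .
        also have "1\<^sub>m n * \<xi> h = \<xi> h" by (rule left_mult_one_mat[OF Xh])
        finally show ?thesis .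
      qed
      have a4: "(Q * \<xi> g) * (\<xi> h * Pinv) = ((Q * \<xi> g) * \<xi> h) * Pinv"
        by (rule assoc_mult_mat[OF cQX Xh Pinv, symmetric])
      have a5: "(Q * \<xi> g) * \<xi> h = Q * (\<xi> g * \<xi> h)" by (rule assoc_mult_mat[OF Q Xg Xh])
      show ?thesis unfolding a1 a2 a3 a4 a5 ..
    qed
    also have "\<xi> g * \<xi> h = \<xi> (SL2_mult p g h)" using Xm gS hS by simp
    finally show ?thesis unfolding Good_def using SL2_closed[OF _ gS hS] p2 by simp
  qed
  fix g assume "g \<in> SL2 p"
  hence "g \<in> Good" using SL2_generated[OF prime p2 sG tG cl] by blast
  thus "map_mat \<tau> (\<xi> g) = pmat n pp * \<xi> g * Pinv" unfolding Good_def Q_def by simp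
qed

end

theorem theorem2:
  fixes p :: nat and c :: int and \<xi> :: "int \<times> int \<times> int \<times> int \<Rightarrow> complex mat"
    and \<gamma> :: "complex \<Rightarrow> complex"
  assumes "prime p" and "odd p"
    and "c = 1 \<or> \<not> QuadRes (int p) c"
    and "is_xi p c \<xi>"
    and "is_gal_generator p \<gamma>"
  defines "r \<equiv> (p - 1) div 2" and "\<tau> \<equiv> \<gamma> \<circ> \<gamma>"
  shows "\<tau> ` (theta p c ` {0..r}) = theta p c ` {0..r} \<and> \<tau> (theta p c 0) = theta p c 0
    \<and> (\<exists>!P. perm_mat (r + 1) P \<and> map_mat \<tau> (Vmat p c) = P * Vmat p c)
    \<and> (\<forall>P Pinv. perm_mat (r + 1) P \<and> map_mat \<tau> (Vmat p c) = P * Vmat p c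
          \<and> inverts_mat P Pinv \<and> inverts_mat Pinv P
          \<longrightarrow> (\<forall>g\<in>SL2 p. map_mat \<tau> (\<xi> g) = P * \<xi> g * Pinv))"
proof -
  have gam: "\<gamma> \<in> gal p" using assms(5) unfolding is_gal_generator_def by blast
  interpret C: ctx p c \<gamma> by unfold_locales (use assms(1-3) gam in auto)
  have r_eq: "r = C.r" unfolding r_def C.r_def ..
  have tau_eq: "\<tau> = C.\<tau>" unfolding \<tau>_def C.\<tau>_def ..
  have set_eq: "{0..C.r} = {..<C.r + 1}" by auto
  have c1: "C.\<tau> ` theta p c ` {..<C.r + 1} = theta p c ` {..<C.r + 1}"
  proof -
    have "C.\<tau> ` theta p c ` {..<C.r + 1} = theta p c ` C.pp ` {..<C.r + 1}"
      unfolding image_image by (rule image_cong[OF refl]) (simp add: C.tau_theta less_Suc_eq_le)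
    thus ?thesis unfolding C.pp_img .
  qed
  have c2: "C.\<tau> (theta p c 0) = theta p c 0" unfolding C.theta_0 by (rule C.t.one)
  have pm: "perm_mat (C.r + 1) (pmat (C.r + 1) C.pp)"
    unfolding perm_mat_def pmat_def using C.pp_permutes by blast
  have c3: "\<exists>!P. perm_mat (C.r + 1) P \<and> map_mat C.\<tau> (Vmat p c) = P * Vmat p c"
    using pm C.tau_V C.perm_unique by blast
  have c4: "\<forall>P Pinv. perm_mat (C.r + 1) P \<and> map_mat C.\<tau> (Vmat p c) = P * Vmat p c
          \<and> inverts_mat P Pinv \<and> inverts_mat Pinv P
          \<longrightarrow> (\<forall>g\<in>SL2 p. map_mat C.\<tau> (\<xi> g) = P * \<xi> g * Pinv)"
  proof (intro allI impI, elim conjE)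
    fix Q Pinv assume q: "perm_mat (C.r + 1) Q" "map_mat C.\<tau> (Vmat p c) = Q * Vmat p c"
      and i1: "inverts_mat Q Pinv" and i2: "inverts_mat Pinv Q"
    have Qe: "Q = pmat (C.r + 1) C.pp" using C.perm_unique q by blast
    have Qc: "Q \<in> carrier_mat (C.r + 1) (C.r + 1)" unfolding Qe by (rule pmat_carrier)
    have e1: "Q * Pinv = 1\<^sub>m (C.r + 1)" using i1 Qc unfolding inverts_mat_def by simp
    have dc: "dim_col Pinv = C.r + 1" using arg_cong[OF e1, of dim_col] by simp
    have e2': "Pinv * Q = 1\<^sub>m (dim_row Pinv)" using i2 unfolding inverts_mat_def by simp
    have dr: "dim_row Pinv = C.r + 1" using arg_cong[OF e2', of dim_col] Qc by simp
    have Pc: "Pinv \<in> carrier_mat (C.r + 1) (C.r + 1)" using dc dr by auto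
    have e2: "Pinv * Q = 1\<^sub>m (C.r + 1)" using e2' dr by simp
    show "\<forall>g\<in>SL2 p. map_mat C.\<tau> (\<xi> g) = Q * \<xi> g * Pinv"
      using C.conj_all[OF assms(4) _ _ Pc] e1 e2 unfolding Qe by blast
  qed
  show ?thesis unfolding r_eq tau_eq set_eq using c1 c2 c3 c4 by blast
qed

end
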